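(* Let $(\mathbb{K},|\cdot|)$ be an algebraically closed normed field, $f\in\mathbb{K}[z]$ a polynomial of degree $n\ge2$, $\xi\in\mathbb{K}^n$ a root-vector of $f$, $N\ge1$ and $1\le p\le\infty$. Suppose $x\in\mathbb{K}^n$ has pairwise distinct components and $E(x)\le R$. Then $f$ has only simple zeros in $\mathbb{K}$, $x\in D_N$, and \[ \|T^{(N)}(x)-\xi\|\preceq\beta_N(E(x))\,\|x-\xi\|. \]
   Context: $a_0$ is the leading coefficient of $f$. For $1\le p\le\infty$, $\|x\|_p=(\sum_i|x_i|^p)^{1/p}$ (max-norm if $p=\infty$). For $x\in\mathbb{K}^n$, $\|x\|=(|x_1|,\dots,|x_n|)\in\mathbb{R}^n$, $\preceq$ the coordinatewise order. $d_i(x)=\min_{j\ne i}|x_i-x_j|$, $d(x)=(d_1(x),\dots,d_n(x))$; for $x\in\mathbb{K}^n$, $y\in\mathbb{R}^n$ with nonzero components, $x/y=(|x_1|/y_1,\dots,|x_n|/y_n)$. A root-vector of $f$ is $\xi$ with $f(z)=a_0\prod_i(z-\xi_i)$ for all $z$. $E(x)=\|(x-\xi)/d(x)\|_p$. Weierstrass-type maps: $T^{(0)}(x)=x$ on $D_0=\mathbb{K}^n$; $D_{N+1}=\{x\in D_N: x_i\ne T^{(N)}_j(x)\ \forall i\ne j\}$, and for $x\in D_{N+1}$, $T^{(N+1)}_i(x)=x_i-\dfrac{f(x_i)}{a_0\prod_{j\ne i}(x_i-T^{(N)}_j(x))}$. Real functions: $\omega(t)=\left(1+\frac{t}{(n-1)^{1/p}}\right)^{n-1}$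 (with $(n-1)^{1/p}=1$ if $p=\infty$), $\Psi(t)=(1+2t)\omega(t)$, $R$ the unique positive solution of $\Psi(t)=2$. On $[0,R]$: $\phi_0\equiv1$, $\omega_N(t)=\left(1+\frac{t\phi_N(t)}{(n-1)^{1/p}}\right)^{n-1}$, $\phi_{N+1}(t)=\frac{\omega_N(t)-1}{1-2t\omega_N(t)}$; for $N\ge1$, $\beta_N(t)=\omega_{N-1}(t)-1$. *)

theory Defs
  imports "HOL-Computational_Algebra.Polynomial" "HOL-Library.Extended_Real"
begin

definition abs_value :: "('a::field \<Rightarrow> real) \<Rightarrow> bool" where
  "abs_value nm \<longleftrightarrow>
     (\<forall>x. nm x \<ge> 0) \<and> (\<forall>x. nm x = 0 \<longleftrightarrow> x = 0) \<and>
     (\<forall>x y. nm (x * y) = nm x * nm y) \<and> (\<forall>x y. nm (x + y) \<le> nm x + nm y)"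

text \<open>Vectors in K^n are functions nat => 'a, only indices 0..n-1 matter.\<close>

definition pnorm :: "ereal \<Rightarrow> nat \<Rightarrow> (nat \<Rightarrow> real) \<Rightarrow> real" where
  "pnorm p n y = (case p of
      ereal q \<Rightarrow> (\<Sum>i<n. \<bar>y i\<bar> powr q) powr (1 / q)
    | _ \<Rightarrow> Max ((\<lambda>i. \<bar>y i\<bar>) ` {..<n}))"

definition dist_i :: "('a \<Rightarrow> real) \<Rightarrow> nat \<Rightarrow> (nat \<Rightarrow> 'a::field) \<Rightarrow> nat \<Rightarrow> real" where
  "dist_i nm n x i = Min ((\<lambda>j. nm (x i - x j)) ` ({..<n} - {i}))"

definition Err :: "('a \<Rightarrow> real) \<Rightarrow> ereal \<Rightarrow> nat \<Rightarrow> (nat \<Rightarrow> 'a::field) \<Rightarrow> (nat \<Rightarrow> 'a) \<Rightarrow> real" where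
  "Err nm p n \<xi> x = pnorm p n (\<lambda>i. nm (x i - \<xi> i) / dist_i nm n x i)"

fun WT :: "'a::field poly \<Rightarrow> nat \<Rightarrow> (nat \<Rightarrow> 'a) \<Rightarrow> (nat \<Rightarrow> 'a)" where
  "WT f 0 x = x"
| "WT f (Suc N) x = (\<lambda>i. x i - poly f (x i) /
      (lead_coeff f * (\<Prod>j\<in>{..<degree f} - {i}. (x i - WT f N x j))))"

fun WD :: "'a::field poly \<Rightarrow> nat \<Rightarrow> (nat \<Rightarrow> 'a) set" where
  "WD f 0 = UNIV"
| "WD f (Suc N) = {x \<in> WD f N. \<forall>i<degree f. \<forall>j<degree f. i \<noteq> j \<longrightarrow> x i \<noteq> WT f N x j}"

definition cp :: "ereal \<Rightarrow> nat \<Rightarrow> real" where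
  "cp p n = (case p of ereal q \<Rightarrow> (real n - 1) powr (1 / q) | _ \<Rightarrow> 1)"

definition omega :: "ereal \<Rightarrow> nat \<Rightarrow> real \<Rightarrow> real" where
  "omega p n t = (1 + t / cp p n) ^ (n - 1)"

definition Psi :: "ereal \<Rightarrow> nat \<Rightarrow> real \<Rightarrow> real" where
  "Psi p n t = (1 + 2 * t) * omega p n t"

definition Rbound :: "ereal \<Rightarrow> nat \<Rightarrow> real" where
  "Rbound p n = (THE t. t > 0 \<and> Psi p n t = 2)"

fun phi :: "ereal \<Rightarrow> nat \<Rightarrow> nat \<Rightarrow> real \<Rightarrow> real"
and omegaN :: "ereal \<Rightarrow> nat \<Rightarrow> nat \<Rightarrow> real \<Rightarrow> real" where
  "phi p n 0 t = 1"
| "phi p n (Suc N) t = (omegaN p n N t - 1) / (1 - 2 * t * omegaN p n N t)"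
| "omegaN p n N t = (1 + t * phi p n N t / cp p n) ^ (n - 1)"

definition beta :: "ereal \<Rightarrow> nat \<Rightarrow> nat \<Rightarrow> real \<Rightarrow> real" where
  "beta p n N t = omegaN p n (N - 1) t - 1"

end

theory Submission
  imports Defs "HOL-Analysis.Analysis"
begin


lemma av_nonneg: "abs_value nm \<Longrightarrow> nm x \<ge> 0" by (simp add: abs_value_def)
lemma av_zero: "abs_value nm \<Longrightarrow> nm x = 0 \<longleftrightarrow> x = 0" by (simp add: abs_value_def)
lemma av_mult: "abs_value nm \<Longrightarrow> nm (x * y) = nm x * nm y" by (simp add: abs_value_def)
lemma av_tri: "abs_value nm \<Longrightarrow> nm (x + y) \<le> nm x + nm y" by (simp add: abs_value_def)
lemma av_one: assumes "abs_value nm" shows "nm 1 = 1"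
proof -
  have "nm 1 = nm 1 * nm 1" using av_mult[OF assms, of 1 1] by simp
  moreover have "nm 1 \<noteq> 0" using av_zero[OF assms] by simp
  ultimately show ?thesis by simp
qed
lemma av_minus1: assumes "abs_value nm" shows "nm (-1) = 1"
proof -
  have "nm (-1) * nm (-1) = 1" using av_mult[OF assms, of "-1" "-1"] av_one[OF assms] by simp
  moreover have "nm (-1) \<ge> 0" using av_nonneg[OF assms] .
  ultimately have "(nm (-1) - 1) * (nm (-1) + 1) = 0" by (simp add: algebra_simps)
  with \<open>nm (-1) \<ge> 0\<close> show ?thesis by auto
qed
lemma av_uminus: assumes "abs_value nm" shows "nm (-x) = nm x"
  using av_mult[OF assms, of "-1" x] av_minus1[OF assms] by simp
lemma av_commute: assumes "abs_value nm" shows "nm (a - b) = nm (b - a)"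
  using av_uminus[OF assms, of "a - b"] by simp
lemma av_divide: assumes "abs_value nm" shows "nm (a / b) = nm a / nm b"
proof (cases "b = 0")
  case True then show ?thesis using av_zero[OF assms, of 0] by simp
next
  case False
  have "nm a = nm (a / b) * nm b" using av_mult[OF assms, of "a/b" b] False by simp
  moreover have "nm b \<noteq> 0" using False av_zero[OF assms] by simp
  ultimately show ?thesis by simp
qed
lemma av_tri_sub: assumes "abs_value nm" shows "nm (a - c) \<le> nm (a - b) + nm (b - c)"
  using av_tri[OF assms, of "a - b" "b - c"] by simp
lemma av_rev: assumes "abs_value nm" shows "nm a - nm b \<le> nm (a - b)"
  using av_tri[OF assms, of "a - b" b] by simp

lemma av_prod_pert:
  assumes "abs_value nm" "finite S"
  shows "nm ((\<Prod>j\<in>S. 1 + v j) - 1) \<le> (\<Prod>j\<in>S. 1 + nm (v j)) - 1"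
  using assms(2)
proof (induction S rule: finite_induct)
  case empty then show ?case using av_zero[OF assms(1), of 0] by simp
next
  case (insert k S)
  let ?P = "\<Prod>j\<in>S. 1 + v j" and ?Q = "\<Prod>j\<in>S. 1 + nm (v j)"
  have e: "(\<Prod>j\<in>insert k S. 1 + v j) - 1 = (1 + v k) * (?P - 1) + v k"
    using insert by (simp add: algebra_simps)
  have "nm ((1 + v k) * (?P - 1) + v k) \<le> nm (1 + v k) * nm (?P - 1) + nm (v k)"
    using av_tri[OF assms(1)] av_mult[OF assms(1)] by metis
  also have "nm (1 + v k) \<le> 1 + nm (v k)" using av_tri[OF assms(1), of 1 "v k"] av_one[OF assms(1)] by simp
  hence "nm (1 + v k) * nm (?P - 1) \<le> (1 + nm (v k)) * (?Q - 1)"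
    using insert.IH by (intro mult_mono) (auto simp: av_nonneg[OF assms(1)])
  finally show ?case using insert e by (simp add: algebra_simps)
qed


lemma cp_pos: assumes "1 \<le> p" "2 \<le> n" shows "cp p n > 0"
proof (cases p)
  case (real q) then show ?thesis using assms by (simp add: cp_def)
next
  case PInf then show ?thesis by (simp add: cp_def)
next
  case MInf then show ?thesis using assms by simp
qed

lemma omega_ge1: assumes "c > 0" "t \<ge> 0" shows "(1 + t / c) ^ m \<ge> (1::real)"
  using assms by (simp add: one_le_power)

lemma Psi_mono:
  assumes "1 \<le> p" "2 \<le> n" "0 \<le> s" "s \<le> t"
  shows "Psi p n s \<le> Psi p n t"
proof -
  have c: "cp p n > 0" using cp_pos assms by blast
  have "(1 + s / cp p n) ^ (n-1) \<le> (1 + t / cp p n) ^ (n-1)"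
    using assms c by (intro power_mono) (auto simp: divide_right_mono)
  moreover have "0 \<le> (1 + s / cp p n) ^ (n-1)" using assms c by simp
  ultimately show ?thesis unfolding Psi_def omega_def using assms
    by (intro mult_mono) auto
qed

lemma Psi_strict:
  assumes "1 \<le> p" "2 \<le> n" "0 \<le> s" "s < t"
  shows "Psi p n s < Psi p n t"
proof -
  have c: "cp p n > 0" using cp_pos assms by blast
  have "(1 + s / cp p n) ^ (n-1) \<le> (1 + t / cp p n) ^ (n-1)"
    using assms c by (intro power_mono) (auto simp: divide_right_mono)
  moreover have "1 \<le> (1 + s / cp p n) ^ (n-1)" using assms c by (simp add: one_le_power)
  ultimately show ?thesis unfolding Psi_def omega_def using assms
    by (intro mult_less_le_imp_less) auto
qed

lemma Rbound_prop:
  assumes "1 \<le> p" "2 \<le> n"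
  shows "Rbound p n > 0 \<and> Psi p n (Rbound p n) = 2"
proof -
  have c: "cp p n > 0" using cp_pos assms by blast
  have cont: "isCont (Psi p n) x" for x
    unfolding Psi_def omega_def by (intro continuous_intros) (use c in auto)
  have "Psi p n 0 = 1" by (simp add: Psi_def omega_def)
  moreover have "Psi p n 1 \<ge> 3"
  proof -
    have "1 \<le> (1 + 1 / cp p n) ^ (n-1)" using c by (simp add: one_le_power)
    thus ?thesis unfolding Psi_def omega_def by simp
  qed
  ultimately obtain r where r: "0 \<le> r" "r \<le> 1" "Psi p n r = 2"
    using IVT[of "Psi p n" 0 2 1] cont by force
  have r0: "r > 0" using r \<open>Psi p n 0 = 1\<close> by (cases "r = 0") auto
  have "(THE t. t > 0 \<and> Psi p n t = 2) = r"
  proof (rule the_equality)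
    show "r > 0 \<and> Psi p n r = 2" using r r0 by auto
    fix t assume t: "t > 0 \<and> Psi p n t = 2"
    show "t = r"
    proof (rule ccontr)
      assume "t \<noteq> r"
      then consider "t < r" | "r < t" by linarith
      then show False using Psi_strict[OF assms] t r r0
        by cases (smt (verit))+
    qed
  qed
  thus ?thesis using r r0 by (simp add: Rbound_def)
qed

lemma Psi_le2:
  assumes "1 \<le> p" "2 \<le> n" "0 \<le> t" "t \<le> Rbound p n"
  shows "Psi p n t \<le> 2"
  using Psi_mono[OF assms] Rbound_prop[OF assms(1,2)] by simp

lemma omegaN_eq: "omegaN p n N t = (1 + t * phi p n N t / cp p n)^(n-1)"
  by (cases N) auto

lemma phi_bounds:
  assumes "1 \<le> p" "2 \<le> n" "0 \<le> t" "Psi p n t \<le> 2"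
  shows "0 \<le> phi p n N t \<and> phi p n N t \<le> 1"
proof (induction N)
  case 0 then show ?case by simp
next
  case (Suc N)
  have c: "cp p n > 0" using cp_pos assms by blast
  let ?w = "omegaN p n N t"
  have w1: "1 \<le> ?w" unfolding omegaN_eq using Suc c assms by (simp add: one_le_power)
  have ww: "?w \<le> omega p n t" unfolding omega_def omegaN_eq using Suc c assms
    by (intro power_mono) (auto simp: divide_right_mono mult_left_le)
  have om1: "1 \<le> omega p n t" unfolding omega_def using c assms by (simp add: one_le_power)
  have "(1 + 2*t) * ?w \<le> 2" using assms(4) ww assms(3) unfolding Psi_def
    by (smt (verit) mult_left_mono)
  moreover have pos: "1 - 2 * t * ?w > 0"
  proof (cases "t = 0")
    case True then show ?thesis by simp
  next
    case False
    have "1 < (1 + t / cp p n)" using False assms c by simp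
    hence "1 < omega p n t" unfolding omega_def using assms
      by (intro one_less_power) auto
    moreover have "(1 + 2*t) * omega p n t \<le> 2" using assms(4) by (simp add: Psi_def)
    ultimately have "1 - 2 * t * omega p n t > 0" by (simp add: algebra_simps)
    moreover have "2 * t * ?w \<le> 2 * t * omega p n t" using ww assms by (intro mult_left_mono) auto
    ultimately show ?thesis by linarith
  qed
  ultimately show ?case using w1 by (simp add: divide_simps algebra_simps)
qed

lemma omegaN_bounds:
  assumes "1 \<le> p" "2 \<le> n" "0 \<le> t" "Psi p n t \<le> 2"
  shows "1 \<le> omegaN p n N t" "omegaN p n N t \<le> omega p n t" "1 - 2 * t * omegaN p n N t > 0"
proof -
  have c: "cp p n > 0" using cp_pos assms by blast
  have ph: "0 \<le> phi p n N t" "phi p n N t \<le> 1" using phi_bounds[OF assms] by auto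
  let ?w = "omegaN p n N t"
  show w1: "1 \<le> ?w" unfolding omegaN_eq using ph c assms by (simp add: one_le_power)
  show ww: "?w \<le> omega p n t" unfolding omega_def omegaN_eq using ph c assms
    by (intro power_mono) (auto simp: divide_right_mono mult_left_le)
  show "1 - 2 * t * ?w > 0"
  proof (cases "t = 0")
    case True then show ?thesis by simp
  next
    case False
    have "1 < (1 + t / cp p n)" using False assms c by simp
    hence "1 < omega p n t" unfolding omega_def using assms
      by (intro one_less_power) auto
    moreover have "(1 + 2*t) * omega p n t \<le> 2" using assms(4) by (simp add: Psi_def)
    ultimately have "1 - 2 * t * omega p n t > 0" by (simp add: algebra_simps)
    moreover have "2 * t * ?w \<le> 2 * t * omega p n t" using ww assms by (intro mult_left_mono) auto
    ultimately show ?thesis by linarith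
  qed
qed


lemma power_mean_pos:
  fixes a :: "nat \<Rightarrow> real"
  assumes "finite S" "S \<noteq> {}" "\<And>j. j \<in> S \<Longrightarrow> a j > 0" "q \<ge> 1"
  shows "sum a S \<le> real (card S) powr (1 - 1/q) * (\<Sum>j\<in>S. a j powr q) powr (1/q)"
proof -
  define k where "k = real (card S)"
  have k: "k > 0" using assms by (simp add: k_def card_gt_0_iff)
  have "(\<Sum>j\<in>S. (1/k) *\<^sub>R a j) powr q \<le> (\<Sum>j\<in>S. (1/k) * a j powr q)"
    apply (rule convex_on_sum[where C="{0<..}" and f="\<lambda>x. x powr q"])
    using assms k by (auto simp: powr_convex k_def)
  hence "(sum a S / k) powr q \<le> (\<Sum>j\<in>S. a j powr q) / k"
    by (simp add: sum_distrib_left sum_divide_distrib)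
  hence "((sum a S / k) powr q) powr (1/q) \<le> ((\<Sum>j\<in>S. a j powr q) / k) powr (1/q)"
    using assms by (intro powr_mono2) auto
  moreover have "((sum a S / k) powr q) powr (1/q) = sum a S / k"
    using assms k by (simp add: powr_powr sum_nonneg less_imp_le)
  ultimately have "sum a S / k \<le> (\<Sum>j\<in>S. a j powr q) powr (1/q) / k powr (1/q)"
    using k assms by (simp add: powr_divide sum_nonneg)
  hence "sum a S \<le> k * ((\<Sum>j\<in>S. a j powr q) powr (1/q) / k powr (1/q))"
    using k by (simp add: divide_simps mult.commute)
  also have "\<dots> = (k / k powr (1/q)) * (\<Sum>j\<in>S. a j powr q) powr (1/q)" by simp
  also have "k / k powr (1/q) = k powr (1 - 1/q)"
    using k by (simp add: powr_diff)
  finally show ?thesis by (simp add: k_def)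
qed

lemma power_mean:
  fixes a :: "nat \<Rightarrow> real"
  assumes "finite S" "\<And>j. j \<in> S \<Longrightarrow> a j \<ge> 0" "q \<ge> 1"
  shows "sum a S \<le> real (card S) powr (1 - 1/q) * (\<Sum>j\<in>S. a j powr q) powr (1/q)"
proof -
  define S' where "S' = {j\<in>S. a j > 0}"
  have fin: "finite S'" "S' \<subseteq> S" using assms by (auto simp: S'_def)
  have s1: "sum a S = sum a S'"
    unfolding S'_def using assms by (intro sum.mono_neutral_right) force+
  have s2: "(\<Sum>j\<in>S. a j powr q) = (\<Sum>j\<in>S'. a j powr q)"
    unfolding S'_def using assms by (intro sum.mono_neutral_right) force+
  show ?thesis
  proof (cases "S' = {}")
    case True then show ?thesis using s1 by simp
  next
    case False
    have "sum a S' \<le> real (card S') powr (1 - 1/q) * (\<Sum>j\<in>S'. a j powr q) powr (1/q)"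
      by (rule power_mean_pos) (use fin False assms in \<open>auto simp: S'_def\<close>)
    also have "\<dots> \<le> real (card S) powr (1 - 1/q) * (\<Sum>j\<in>S'. a j powr q) powr (1/q)"
      apply (intro mult_right_mono powr_mono2)
      using assms fin card_mono[OF assms(1) fin(2)] by auto
    finally show ?thesis using s1 s2 by simp
  qed
qed

lemma pnorm_ge:
  assumes "1 \<le> p" "j < n"
  shows "\<bar>y j\<bar> \<le> pnorm p n y"
proof (cases p)
  case (real q)
  have q: "q \<ge> 1" using assms real by simp
  have "\<bar>y j\<bar> powr q \<le> (\<Sum>i<n. \<bar>y i\<bar> powr q)"
    using assms by (intro member_le_sum) auto
  hence "(\<bar>y j\<bar> powr q) powr (1/q) \<le> (\<Sum>i<n. \<bar>y i\<bar> powr q) powr (1/q)"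
    using q by (intro powr_mono2) auto
  thus ?thesis using q real by (simp add: pnorm_def powr_powr)
next
  case PInf then show ?thesis using assms by (simp add: pnorm_def)
next
  case MInf then show ?thesis using assms by simp
qed

lemma pnorm_nonneg: assumes "1 \<le> p" "0 < n" shows "0 \<le> pnorm p n y"
  using pnorm_ge[OF assms(1) assms(2), of y] by linarith

lemma prod_bound:
  fixes u :: "nat \<Rightarrow> real"
  assumes "1 \<le> p" "2 \<le> n" "i < n" "\<And>j. j < n \<Longrightarrow> u j \<ge> 0" "\<phi> \<ge> 0"
  shows "(\<Prod>j\<in>{..<n}-{i}. 1 + \<phi> * u j) \<le> (1 + pnorm p n u * \<phi> / cp p n) ^ (n-1)"
proof -
  define S where "S = {..<n} - {i}"
  define m where "m = n - 1"
  have cS: "card S = m" using assms by (simp add: S_def m_def)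
  have m: "m \<ge> 1" using assms by (simp add: m_def)
  have fS: "finite S" "S \<noteq> {}" using cS m by (simp add: S_def, metis card.empty not_one_le_zero)
  have pos: "\<And>j. j \<in> S \<Longrightarrow> 1 + \<phi> * u j \<ge> 0" using assms by (auto simp: S_def)
  let ?P = "\<Prod>j\<in>S. 1 + \<phi> * u j"
  let ?A = "(\<Sum>j\<in>S. (1 + \<phi> * u j) / card S)"
  have P0: "?P \<ge> 0" using pos by (simp add: prod_nonneg)
  have am: "?P powr (1 / card S) \<le> ?A"
    by (rule arith_geom_mean) (use fS pos in auto)
  have "?P = (?P powr (1 / card S)) ^ m"
  proof (cases "?P = 0")
    case True then show ?thesis using m by simp
  next
    case False
    hence "?P > 0" using P0 by simp
    thus ?thesis using cS m by (simp add: powr_realpow[symmetric] powr_powr)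
  qed
  also have "\<dots> \<le> ?A ^ m" using am by (intro power_mono) auto
  also have "?A = 1 + \<phi> * (sum u S / m)"
    using cS m by (simp add: sum_divide_distrib[symmetric] sum.distrib sum_distrib_left[symmetric] field_simps)
  also have "sum u S / m \<le> pnorm p n u / cp p n"
  proof (cases p)
    case (real q)
    have q: "q \<ge> 1" using assms real by simp
    have "sum u S \<le> real m powr (1 - 1/q) * (\<Sum>j\<in>S. u j powr q) powr (1/q)"
      using power_mean[OF fS(1), of u q] q assms cS by (auto simp: S_def)
    also have "(\<Sum>j\<in>S. u j powr q) \<le> (\<Sum>j<n. \<bar>u j\<bar> powr q)"
    proof -
      have "(\<Sum>j\<in>S. u j powr q) = (\<Sum>j\<in>S. \<bar>u j\<bar> powr q)"
        using assms by (intro sum.cong) (auto simp: S_def)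
      also have "\<dots> \<le> (\<Sum>j<n. \<bar>u j\<bar> powr q)"
        by (rule sum_mono2) (auto simp: S_def)
      finally show ?thesis .
    qed
    hence "(\<Sum>j\<in>S. u j powr q) powr (1/q) \<le> pnorm p n u"
      using q real by (auto simp: pnorm_def intro!: powr_mono2 sum_nonneg)
    hence "real m powr (1 - 1/q) * (\<Sum>j\<in>S. u j powr q) powr (1/q) \<le> real m powr (1 - 1/q) * pnorm p n u"
      by (intro mult_left_mono) auto
    finally have "sum u S \<le> real m powr (1 - 1/q) * pnorm p n u" .
    hence "sum u S / m \<le> real m powr (1 - 1/q) / m * pnorm p n u"
      using m by (simp add: divide_right_mono)
    also have "real m powr (1 - 1/q) / m = 1 / real m powr (1/q)"
      using m by (simp add: powr_diff)
    also have mm: "real m = real n - 1" using assms by (simp add: m_def)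
    finally show ?thesis using real mm by (simp add: cp_def)
  next
    case PInf
    have "sum u S \<le> sum (\<lambda>j. pnorm p n u) S"
      using pnorm_ge[OF assms(1), of _ n u] assms by (intro sum_mono) (auto simp: S_def)
    thus ?thesis using PInf cS m by (simp add: cp_def divide_simps mult.commute)
  next
    case MInf then show ?thesis using assms by simp
  qed
  hence "\<phi> * (sum u S / m) \<le> \<phi> * (pnorm p n u / cp p n)"
    using assms by (intro mult_left_mono) auto
  hence "1 + \<phi> * (sum u S / m) \<le> 1 + pnorm p n u * \<phi> / cp p n"
    by (simp add: mult.commute)
  hence "(1 + \<phi> * (sum u S / m)) ^ m \<le> (1 + pnorm p n u * \<phi> / cp p n) ^ m"
  proof (intro power_mono)
    have "sum u S \<ge> 0" using assms by (intro sum_nonneg) (auto simp: S_def)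
    thus "0 \<le> 1 + \<phi> * (sum u S / m)" using assms by simp
  qed
  finally show ?thesis by (simp add: S_def m_def)
qed


lemma alg_closed_infinite: "infinite (UNIV :: 'a::alg_closed_field set)"
proof
  assume fin: "finite (UNIV::'a set)"
  define P where "P = (\<Prod>a\<in>(UNIV::'a set). [:-a,1:])"
  have dP: "degree P = card (UNIV::'a set)"
    unfolding P_def by (subst degree_prod_eq_sum_degree) auto
  have "card (UNIV::'a set) \<ge> 2"
  proof -
    have "{0,1} \<subseteq> (UNIV::'a set)" by auto
    hence "card {0::'a,1} \<le> card (UNIV::'a set)" using fin by (intro card_mono) auto
    thus ?thesis by simp
  qed
  hence "degree (P + 1) = degree P" by (intro degree_add_eq_left) (simp add: dP)
  hence "degree (P + 1) > 0" using dP \<open>card UNIV \<ge> 2\<close> by simp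
  then obtain z where "poly (P + 1) z = 0" using alg_closed_imp_poly_has_root by blast
  moreover have "poly P z = 0" unfolding P_def poly_prod using fin
    by (simp add: prod_zero_iff)
  ultimately show False by simp
qed

lemma simple_zeros:
  fixes f :: "'a::alg_closed_field poly" and \<xi> :: "nat \<Rightarrow> 'a"
  assumes "\<forall>z. poly f z = lead_coeff f * (\<Prod>i<n. (z - \<xi> i))" "f \<noteq> 0"
    "\<forall>i<n. \<forall>j<n. i \<noteq> j \<longrightarrow> \<xi> i \<noteq> \<xi> j"
  shows "\<forall>z. poly f z = 0 \<longrightarrow> order z f = 1"
proof (intro allI impI)
  fix z assume z: "poly f z = 0"
  define a0 where "a0 = lead_coeff f"
  have a0: "a0 \<noteq> 0" using assms by (simp add: a0_def)
  define g where "g = smult a0 (\<Prod>i<n. [:-\<xi> i,1:])"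
  have "poly (f - g) w = 0" for w using assms(1) by (simp add: g_def a0_def poly_prod)
  hence fg: "f = g"
  proof -
    assume h: "\<And>w. poly (f - g) w = 0"
    show "f = g"
    proof (rule ccontr)
      assume "f \<noteq> g"
      hence "finite {w. poly (f - g) w = 0}" by (intro poly_roots_finite) auto
      thus False using h alg_closed_infinite[where 'a='a] by simp
    qed
  qed
  have "(\<Prod>i<n. (z - \<xi> i)) = 0" using z assms(1) a0 by (simp add: a0_def)
  then obtain k where k: "k < n" "z = \<xi> k" by auto
  define S where "S = {..<n} - {k}"
  define h where "h = (\<Prod>i\<in>S. [:-\<xi> i,1:])"
  have h0: "h \<noteq> 0" unfolding h_def by (simp add: S_def)
  have "g = smult a0 ([:-\<xi> k,1:] * h)"
    unfolding g_def h_def S_def using k by (subst prod.remove[of _ k]) auto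
  hence "order z f = order z ([:-\<xi> k,1:] * h)" using fg a0 by (simp add: order_smult)
  also have "\<dots> = order z [:-\<xi> k,1:] + order z h" using h0 by (intro order_mult) (simp del: mult_pCons_left)
  also have "order z [:-\<xi> k,1:] = 1" using order_power_n_n[of "\<xi> k" 1] k by simp
  also have "order z h = 0"
  proof -
    have "poly h z \<noteq> 0" unfolding h_def poly_prod using assms(3) k by (auto simp: S_def)
    thus ?thesis using h0 by (simp add: order_eq_0_iff)
  qed
  finally show "order z f = 1" by simp
qed


theorem lemma2p9:
  fixes nm :: "'a::alg_closed_field \<Rightarrow> real"
    and f :: "'a poly" and \<xi> x :: "nat \<Rightarrow> 'a" and N :: nat and p :: ereal
  assumes "abs_value nm"
    and "degree f \<ge> 2"
    and "\<forall>z. poly f z = lead_coeff f * (\<Prod>i<degree f. (z - \<xi> i))"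
    and "N \<ge> 1"
    and "1 \<le> p"
    and "\<forall>i<degree f. \<forall>j<degree f. i \<noteq> j \<longrightarrow> x i \<noteq> x j"
    and "Err nm p (degree f) \<xi> x \<le> Rbound p (degree f)"
  shows "(\<forall>z. poly f z = 0 \<longrightarrow> order z f = 1)
    \<and> x \<in> WD f N
    \<and> (\<forall>i<degree f. nm (WT f N x i - \<xi> i)
          \<le> beta p (degree f) N (Err nm p (degree f) \<xi> x) * nm (x i - \<xi> i))"
proof -
  note nm = assms(1)
  define n where "n = degree f"
  have n2: "n \<ge> 2" using assms(2) by (simp add: n_def)
  have f0: "f \<noteq> 0" using assms(2) by auto
  define a0 where "a0 = lead_coeff f"
  have a0: "a0 \<noteq> 0" using f0 by (simp add: a0_def)
  have root: "\<And>z. poly f z = a0 * (\<Prod>i<n. (z - \<xi> i))" using assms(3) by (simp add: a0_def n_def)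
  have xd: "\<And>i j. i < n \<Longrightarrow> j < n \<Longrightarrow> i \<noteq> j \<Longrightarrow> x i \<noteq> x j" using assms(6) by (simp add: n_def)
  define d where "d = dist_i nm n x"
  have ne: "{..<n} - {j} \<noteq> {}" for j
  proof -
    have "(if j = 0 then 1 else 0) \<in> {..<n} - {j}" using n2 by auto
    thus ?thesis by blast
  qed
  have dpos: "d j > 0" if "j < n" for j
    unfolding d_def dist_i_def using ne[of j] xd[OF that] av_zero[OF nm] av_nonneg[OF nm]
    by (subst Min_gr_iff) (auto simp: less_le)
  have dle: "d j \<le> nm (x j - x k)" if "j < n" "k < n" "k \<noteq> j" for j k
    unfolding d_def dist_i_def using that by (intro Min_le) auto
  define u where "u = (\<lambda>j. nm (x j - \<xi> j) / d j)"
  define E where "E = Err nm p n \<xi> x"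
  have Eu: "E = pnorm p n u" by (simp add: E_def Err_def u_def d_def)
  have u0: "u j \<ge> 0" if "j < n" for j unfolding u_def using av_nonneg[OF nm] dpos[OF that]
    by simp
  have nmu: "nm (x j - \<xi> j) = u j * d j" if "j < n" for j
    unfolding u_def using dpos[OF that] by simp
  have uE: "u j \<le> E" if "j < n" for j
    using pnorm_ge[OF assms(5) that, of u] u0[OF that] Eu by simp
  have E0: "0 \<le> E" using uE[of 0] u0[of 0] n2 by simp
  have PsiE: "Psi p n E \<le> 2"
    using Psi_le2[OF assms(5) n2 E0] assms(7) by (simp add: E_def n_def)
  have c: "cp p n > 0" using cp_pos[OF assms(5) n2] .
  have Ehalf: "2 * E < 1"
  proof -
    have "1 - 2 * E * omegaN p n 0 E > 0" "1 \<le> omegaN p n 0 E"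
      using omegaN_bounds[OF assms(5) n2 E0 PsiE, of 0] by (auto simp del: omegaN.simps)
    moreover have "2 * E \<le> 2 * E * omegaN p n 0 E" using calculation E0 by (simp add: mult_le_cancel_left1 del: omegaN.simps)
    ultimately show ?thesis by linarith
  qed
  define \<phi> where "\<phi> = (\<lambda>N. phi p n N E)"
  have \<phi>b: "0 \<le> \<phi> N" "\<phi> N \<le> 1" for N using phi_bounds[OF assms(5) n2 E0 PsiE] by (auto simp: \<phi>_def)
  have WTS: "WT f (Suc M) x i = x i - poly f (x i) / (a0 * (\<Prod>j\<in>{..<n}-{i}. (x i - WT f M x j)))" for M i
    by (simp add: a0_def n_def)
  have WDS: "x \<in> WD f (Suc M) \<longleftrightarrow> x \<in> WD f M \<and> (\<forall>i<n. \<forall>j<n. i \<noteq> j \<longrightarrow> x i \<noteq> WT f M x j)" for M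
    by (simp add: n_def)
  define Inv where "Inv M \<longleftrightarrow> x \<in> WD f M \<and> (\<forall>j<n. \<forall>i<n. i \<noteq> j \<longrightarrow> nm (WT f M x j - \<xi> j) \<le> \<phi> M * u j * nm (x i - WT f M x j))" for M
  have step: "x \<in> WD f (Suc M) \<and> (\<forall>i<n. nm (WT f (Suc M) x i - \<xi> i) \<le> (omegaN p n M E - 1) * nm (x i - \<xi> i))"
    if IM: "Inv M" for M
  proof -
    let ?y = "WT f M x"
    have H: "nm (?y j - \<xi> j) \<le> \<phi> M * u j * nm (x i - ?y j)" if "j<n" "i<n" "i\<noteq>j" for i j
      using IM that by (auto simp: Inv_def)
    have ne: "x i \<noteq> ?y j" if ij: "j<n" "i<n" "i\<noteq>j" for i j
    proof
      assume eq: "x i = ?y j"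
      then have "nm (?y j - \<xi> j) \<le> 0" using H[OF ij] av_zero[OF nm, of 0] by simp
      hence "?y j = \<xi> j" using av_nonneg[OF nm, of "?y j - \<xi> j"] av_zero[OF nm, of "?y j - \<xi> j"] by simp
      hence xi: "x i = \<xi> j" using eq by simp
      have "nm (x j - x i) \<le> nm (x j - \<xi> j) + nm (\<xi> j - x i)" by (rule av_tri_sub[OF nm])
      also have "nm (\<xi> j - x i) = 0" using xi av_zero[OF nm, of 0] by simp
      also have "nm (x j - \<xi> j) = u j * d j" by (rule nmu[OF ij(1)])
      also have "u j * d j \<le> u j * nm (x j - x i)" using dle[OF ij(1) ij(2)] ij u0[OF ij(1)] by (intro mult_left_mono) auto
      finally have "nm (x j - x i) \<le> u j * nm (x j - x i)" by simp
      moreover have "nm (x j - x i) > 0" using xd[OF ij(1) ij(2)] ij av_zero[OF nm] av_nonneg[OF nm] by (auto simp: less_le)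
      moreover have "u j < 1" using uE[OF ij(1)] Ehalf E0 by linarith
      ultimately show False by (smt (verit) mult_less_cancel_right2 mult.commute)
    qed
    have WD: "x \<in> WD f (Suc M)" unfolding WDS using IM ne by (auto simp: Inv_def)
    have bound: "nm (WT f (Suc M) x i - \<xi> i) \<le> (omegaN p n M E - 1) * nm (x i - \<xi> i)" if i: "i < n" for i
    proof -
      define S where "S = {..<n} - {i}"
      define v where "v = (\<lambda>j. (?y j - \<xi> j) / (x i - ?y j))"
      have Sn: "\<And>j. j \<in> S \<Longrightarrow> j < n \<and> i \<noteq> j" by (auto simp: S_def)
      have nz: "x i - ?y j \<noteq> 0" if "j \<in> S" for j using ne[of j i] Sn[OF that] i by simp
      have fS: "finite S" by (simp add: S_def)
      have B: "(\<Prod>j\<in>S. (x i - ?y j)) \<noteq> 0" using nz by (simp add: prod_zero_iff[OF fS])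
      have pf: "poly f (x i) = a0 * ((x i - \<xi> i) * (\<Prod>j\<in>S. (x i - \<xi> j)))"
        using root[of "x i"] i by (simp add: S_def prod.remove[of "{..<n}" i])
      have pv: "(\<Prod>j\<in>S. 1 + v j) = (\<Prod>j\<in>S. (x i - \<xi> j)) / (\<Prod>j\<in>S. (x i - ?y j))"
      proof -
        have "(\<Prod>j\<in>S. 1 + v j) = (\<Prod>j\<in>S. (x i - \<xi> j) / (x i - ?y j))"
        proof (rule prod.cong)
          fix j assume "j \<in> S"
          hence "x i - ?y j \<noteq> 0" by (rule nz)
          thus "1 + v j = (x i - \<xi> j) / (x i - ?y j)" by (simp add: v_def field_simps)
        qed simp
        thus ?thesis by (simp add: prod_dividef)
      qed
      have eq1: "WT f (Suc M) x i - \<xi> i = (x i - \<xi> i) * (1 - (\<Prod>j\<in>S. 1 + v j))"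
        unfolding WTS pf pv S_def[symmetric] using a0 B by (simp add: field_simps)
      have eqn: "nm (WT f (Suc M) x i - \<xi> i) = nm (x i - \<xi> i) * nm ((\<Prod>j\<in>S. 1 + v j) - 1)"
        unfolding eq1 av_mult[OF nm] using av_commute[OF nm, of 1] by simp
      have "nm ((\<Prod>j\<in>S. 1 + v j) - 1) \<le> (\<Prod>j\<in>S. 1 + nm (v j)) - 1"
        by (rule av_prod_pert[OF nm]) (simp add: S_def)
      also have "(\<Prod>j\<in>S. 1 + nm (v j)) \<le> (\<Prod>j\<in>S. 1 + \<phi> M * u j)"
      proof (rule prod_mono)
        fix j assume jS: "j \<in> S"
        have pos: "nm (x i - ?y j) > 0" using nz[OF jS] av_zero[OF nm, of "x i - ?y j"] av_nonneg[OF nm, of "x i - ?y j"] by linarith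
        have "nm (v j) = nm (?y j - \<xi> j) / nm (x i - ?y j)" by (simp add: v_def av_divide[OF nm])
        also have "\<dots> \<le> \<phi> M * u j" using H[of j i] Sn[OF jS] i pos by (simp add: divide_simps)
        finally show "0 \<le> 1 + nm (v j) \<and> 1 + nm (v j) \<le> 1 + \<phi> M * u j"
          using av_nonneg[OF nm] by (smt (verit))
      qed
      also have "(\<Prod>j\<in>S. 1 + \<phi> M * u j) \<le> omegaN p n M E"
        unfolding S_def omegaN_eq using prod_bound[OF assms(5) n2 i, of u "\<phi> M"] u0 \<phi>b Eu
        by (simp add: \<phi>_def mult.commute)
      finally have "nm ((\<Prod>j\<in>S. 1 + v j) - 1) \<le> omegaN p n M E - 1" by auto
      from mult_left_mono[OF this av_nonneg[OF nm, of "x i - \<xi> i"]]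
      show ?thesis using eqn by (simp add: mult.commute)
    qed
    show ?thesis using WD bound by blast
  qed
  have dsym: "d j \<le> nm (x i - x j)" if "j < n" "i < n" "i \<noteq> j" for i j
    using dle[OF that(1,2)] that(3) av_commute[OF nm, of "x j" "x i"] by simp
  have inv: "Inv M" for M
  proof (induction M)
    case 0
    have "nm (x j - \<xi> j) \<le> 1 * u j * nm (x i - x j)" if "j<n" "i<n" "i\<noteq>j" for i j
      using nmu[OF that(1)] dsym[OF that] u0[OF that(1)] by (simp add: mult_left_mono)
    thus ?case by (simp add: Inv_def \<phi>_def)
  next
    case (Suc M)
    note st = step[OF Suc.IH]
    define w where "w = omegaN p n M E"
    have w1: "1 \<le> w" and D: "1 - 2 * E * w > 0"
      using omegaN_bounds[OF assms(5) n2 E0 PsiE, of M] by (auto simp: w_def simp del: omegaN.simps)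
    have phiS: "\<phi> (Suc M) = (w - 1) / (1 - 2 * E * w)" by (simp add: \<phi>_def w_def del: omegaN.simps)
    have "nm (WT f (Suc M) x j - \<xi> j) \<le> \<phi> (Suc M) * u j * nm (x i - WT f (Suc M) x j)"
      if ij: "j<n" "i<n" "i\<noteq>j" for i j
    proof -
      let ?z = "WT f (Suc M) x j"
      have "nm (?z - \<xi> j) \<le> (omegaN p n M E - 1) * nm (x j - \<xi> j)" using st ij(1) by blast
      hence zb: "nm (?z - \<xi> j) \<le> (w - 1) * (u j * d j)"
        using nmu[OF ij(1)] by (simp add: w_def del: omegaN.simps)
      have "nm (x i - x j) \<le> nm (x i - ?z) + nm (?z - x j)" by (rule av_tri_sub[OF nm])
      also have "nm (?z - x j) \<le> nm (?z - \<xi> j) + nm (\<xi> j - x j)" by (rule av_tri_sub[OF nm])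
      also have "nm (\<xi> j - x j) = u j * d j" using nmu[OF ij(1)] av_commute[OF nm, of "\<xi> j" "x j"] by simp
      finally have "nm (x i - x j) \<le> nm (x i - ?z) + (w - 1) * (u j * d j) + u j * d j" using zb by simp
      hence "d j - w * (u j * d j) \<le> nm (x i - ?z)" using dsym[OF ij] by (simp add: algebra_simps)
      moreover have "w * (u j * d j) \<le> (2 * E * w) * d j"
      proof -
        have "u j \<le> 2 * E" using uE[OF ij(1)] E0 by simp
        hence "w * u j \<le> w * (2 * E)" using w1 by (intro mult_left_mono) auto
        from mult_right_mono[OF this less_imp_le[OF dpos[OF ij(1)]]]
        show ?thesis by (simp add: algebra_simps)
      qed
      ultimately have lo: "(1 - 2 * E * w) * d j \<le> nm (x i - ?z)" by (simp add: algebra_simps)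
      have c0: "0 \<le> (w - 1) / (1 - 2 * E * w) * u j" using w1 D u0[OF ij(1)] by simp
      have "(w - 1) / (1 - 2 * E * w) * u j * ((1 - 2 * E * w) * d j) \<le> (w - 1) / (1 - 2 * E * w) * u j * nm (x i - ?z)"
        using mult_left_mono[OF lo c0] .
      moreover have "(w - 1) / (1 - 2 * E * w) * u j * ((1 - 2 * E * w) * d j) = (w - 1) * (u j * d j)"
        using D by (simp add: field_simps)
      ultimately show ?thesis unfolding phiS using zb by linarith
    qed
    thus ?case using st unfolding Inv_def by blast
  qed
  obtain M where NM: "N = Suc M" using assms(4) by (cases N) auto
  have part2: "x \<in> WD f N \<and> (\<forall>i<degree f. nm (WT f N x i - \<xi> i)
          \<le> beta p (degree f) N (Err nm p (degree f) \<xi> x) * nm (x i - \<xi> i))"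
  proof -
    have bb: "beta p (degree f) N (Err nm p (degree f) \<xi> x) = omegaN p n M E - 1"
      by (simp add: beta_def NM E_def n_def del: omegaN.simps)
    have s: "x \<in> WD f N \<and> (\<forall>i<degree f. nm (WT f N x i - \<xi> i) \<le> (omegaN p n M E - 1) * nm (x i - \<xi> i))"
      unfolding NM n_def[symmetric] by (rule step[OF inv[of M]])
    show ?thesis unfolding bb by (rule s)
  qed
  have xid: "\<xi> i \<noteq> \<xi> j" if ij: "i<n" "j<n" "i\<noteq>j" for i j
  proof
    assume eq: "\<xi> i = \<xi> j"
    have "nm (x i - x j) \<le> nm (x i - \<xi> i) + nm (\<xi> i - x j)" by (rule av_tri_sub[OF nm])
    also have "nm (\<xi> i - x j) = u j * d j" using eq nmu[OF ij(2)] av_commute[OF nm, of "\<xi> j" "x j"] by simp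
    also have "nm (x i - \<xi> i) = u i * d i" by (rule nmu[OF ij(1)])
    finally have a: "nm (x i - x j) \<le> u i * d i + u j * d j" .
    have "u i * d i \<le> E * nm (x i - x j)"
      using uE[OF ij(1)] dle[OF ij(1,2)] ij(3) u0[OF ij(1)] dpos[OF ij(1)] E0 by (intro mult_mono) auto
    moreover have "u j * d j \<le> E * nm (x i - x j)"
      using uE[OF ij(2)] dsym[OF ij(2,1)] ij(3) u0[OF ij(2)] dpos[OF ij(2)] E0 by (intro mult_mono) auto
    moreover have "nm (x i - x j) > 0" using xd[OF ij] av_zero[OF nm, of "x i - x j"] av_nonneg[OF nm, of "x i - x j"] by auto
    ultimately have h1: "nm (x i - x j) \<le> E * nm (x i - x j) + E * nm (x i - x j)"
      and h0: "nm (x i - x j) > 0" using a by linarith+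
    have "(2 * E) * nm (x i - x j) < 1 * nm (x i - x j)"
      using Ehalf h0 by (intro mult_strict_right_mono) auto
    thus False using h1 by (simp add: algebra_simps)
  qed
  have part1: "\<forall>z. poly f z = 0 \<longrightarrow> order z f = 1"
    using simple_zeros[where f=f and n=n and \<xi>=\<xi>] root f0 xid by (auto simp: a0_def)
  show ?thesis using part1 part2 by blast
qed

end
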